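(* In the noisy search problem with $1/\delta=2^L$ using the $hiePM$ strategy described in the context, for every level $l<L$ the nested log-likelihood $U^{\{l\}}(t)$ is a submartingale; more precisely, for all $t>0$, $$\mathbb{E}[U^{\{l\}}(t+1)\mid\pi(t)]-U^{\{l\}}(t)\ge K_h:=\min\Big\{I\big(\tfrac13,p[\tfrac12]\big),\ \tfrac23 D\big(\tfrac13 B_1+\tfrac23 B_0\,\|\,B_0\big)\Big\},$$ where $B_1=\mathrm{Bern}(1-p[1/2])$, $B_0=\mathrm{Bern}(p[1/2])$.
   Context: Search problem: fix $\delta\in(0,1)$ with $N=1/\delta=2^L$, $L$ an integer. A target index $\theta$ is uniform on $\{1,\dots,N\}$. A noise profile $p:(0,1)\to(0,1/2)$ is continuous and non-decreasing; $p[x]:=p(x)$. At each time $t$ a query set $S_t$ is chosen from the past and one observes $Y_t=\mathbb{1}(\theta\in S_t)\oplus Z_t$ with, conditionally on $S_t$, $Z_t\sim\mathrm{Bern}(p[\delta|S_t|])$ conditionally i.i.d. across time. Posterior $\pi_i(t)=\mathbb{P}(\theta=i\mid S_1^t,Y_1^t)$, $\pi_i(0)=\delta$; $\pi_S=\sum_{i\in S}\pi_i$. $hiePM$: $H_l^m=\{m2^{L-l}+1,\dots,(m+1)2^{L-l}\}$ for $l=0,\dots,L$, $m=0,\dots,2^l-1$. At time $t$, $l^*_t$ is the largest $l$ with $\max_m\pi_{H_l^m}(t)\ge\tfrac12$, $m^*_t=\arg\max_m\pi_{H^m_{l^*_t}}(t)$, $(l_{t+1},m_{t+1})$ minimizes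 $|\pi_{H^{m'}_{l'}}(t)-\tfrac12|$ over $\{(l^*_t,m^*_t),(l^*_t+1,2m^*_t),(l^*_t+1,2m^*_t+1)\}$, and $S_{t+1}=H^{m_{t+1}}_{l_{t+1}}$. Nested log-likelihood: for $q=1,\dots,2^l$, $\mathrm{bin}(q)=\{(q-1)2^{L-l}+1,\dots,q2^{L-l}\}$, $\pi^{\{l\}}_q(t)=\sum_{i\in\mathrm{bin}(q)}\pi_i(t)$, $U^{\{l\}}(t)=\sum_{q=1}^{2^l}\pi^{\{l\}}_q(t)\log\frac{\pi^{\{l\}}_q(t)}{1-\pi^{\{l\}}_q(t)}$. $D(\cdot\|\cdot)$ is KL divergence; convex combinations of Bernoulli distributions denote mixtures; $I(q,p)$ is the mutual information between input $\mathrm{Bern}(q)$ and the output of a binary symmetric channel with crossover probability $p$. *)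

theory Defs
  imports "HOL-Analysis.Analysis"
begin

text \<open>Noisy search with N = 2^L cells, indices 1..N, delta = 1/2^L.
  A posterior is a function pi :: nat => real; only its values on 1..N matter.\<close>

definition cells :: "nat \<Rightarrow> nat set" where
  "cells L = {1..2^L}"

definition Hset :: "nat \<Rightarrow> nat \<Rightarrow> nat \<Rightarrow> nat set" where
  "Hset L l m = {m * 2^(L - l) + 1 .. (m + 1) * 2^(L - l)}"

definition mass :: "(nat \<Rightarrow> real) \<Rightarrow> nat set \<Rightarrow> real" where
  "mass \<pi> A = (\<Sum>i\<in>A. \<pi> i)"

text \<open>Nested log-likelihood U^{l}; bin(q) = H_l^{q-1}.\<close>
definition Unest :: "nat \<Rightarrow> nat \<Rightarrow> (nat \<Rightarrow> real) \<Rightarrow> real" where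
  "Unest L l \<pi> = (\<Sum>q\<in>{1..2^l}. mass \<pi> (Hset L l (q - 1)) *
        ln (mass \<pi> (Hset L l (q - 1)) / (1 - mass \<pi> (Hset L l (q - 1)))))"

text \<open>hiePM query rule: S is a query set admissible for posterior pi
  (any tie-breaking in the arg max / arg min is allowed).\<close>
definition hie_candidates :: "nat \<Rightarrow> nat \<Rightarrow> nat \<Rightarrow> (nat \<times> nat) set" where
  "hie_candidates L ls ms =
     {(ls, ms)} \<union> (if ls < L then {(ls + 1, 2 * ms), (ls + 1, 2 * ms + 1)} else {})"

definition hie_query :: "nat \<Rightarrow> (nat \<Rightarrow> real) \<Rightarrow> nat set \<Rightarrow> bool" where
  "hie_query L \<pi> S \<longleftrightarrow>
     (\<exists>ls ms l' m'.
        ls \<le> L \<and> ms < 2^ls \<and>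
        (\<exists>m<2^ls. mass \<pi> (Hset L ls m) \<ge> 1/2) \<and>
        (\<forall>l2. ls < l2 \<and> l2 \<le> L \<longrightarrow> (\<forall>m<2^l2. mass \<pi> (Hset L l2 m) < 1/2)) \<and>
        (\<forall>m<2^ls. mass \<pi> (Hset L ls m) \<le> mass \<pi> (Hset L ls ms)) \<and>
        (l', m') \<in> hie_candidates L ls ms \<and>
        (\<forall>(l2, m2)\<in>hie_candidates L ls ms.
            \<bar>mass \<pi> (Hset L l' m') - 1/2\<bar> \<le> \<bar>mass \<pi> (Hset L l2 m2) - 1/2\<bar>) \<and>
        S = Hset L l' m')"

text \<open>Observation model: Y = 1(theta in S) xor Z, Z ~ Bern(p[delta |S|]).
  lik L p S y i = P(Y = y | theta = i, S), with y = True meaning Y = 1.\<close>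
definition lik :: "nat \<Rightarrow> (real \<Rightarrow> real) \<Rightarrow> nat set \<Rightarrow> bool \<Rightarrow> nat \<Rightarrow> real" where
  "lik L p S y i = (let q = p (real (card S) / 2^L) in
                    if (i \<in> S) = y then 1 - q else q)"

definition prob_obs :: "nat \<Rightarrow> (real \<Rightarrow> real) \<Rightarrow> (nat \<Rightarrow> real) \<Rightarrow> nat set \<Rightarrow> bool \<Rightarrow> real" where
  "prob_obs L p \<pi> S y = (\<Sum>j\<in>cells L. \<pi> j * lik L p S y j)"

definition post :: "nat \<Rightarrow> (real \<Rightarrow> real) \<Rightarrow> (nat \<Rightarrow> real) \<Rightarrow> nat set \<Rightarrow> bool \<Rightarrow> nat \<Rightarrow> real" where
  "post L p \<pi> S y i = \<pi> i * lik L p S y i / prob_obs L p \<pi> S y"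

inductive reach :: "nat \<Rightarrow> (real \<Rightarrow> real) \<Rightarrow> nat \<Rightarrow> (nat \<Rightarrow> real) \<Rightarrow> bool"
  for L p where
  init: "reach L p 0 (\<lambda>i. if i \<in> cells L then 1 / 2^L else 0)"
| step: "reach L p t \<pi> \<Longrightarrow> hie_query L \<pi> S \<Longrightarrow> reach L p (Suc t) (post L p \<pi> S y)"

definition KL_bern :: "real \<Rightarrow> real \<Rightarrow> real" where
  "KL_bern a b = a * ln (a / b) + (1 - a) * ln ((1 - a) / (1 - b))"

definition MI_bsc :: "real \<Rightarrow> real \<Rightarrow> real" where
  "MI_bsc q p =
     (let px = (\<lambda>x::bool. if x then q else 1 - q);
          pyx = (\<lambda>x y::bool. if x = y then 1 - p else p);
          py = (\<lambda>y. px True * pyx True y + px False * pyx False y)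
      in (\<Sum>x\<in>UNIV. \<Sum>y\<in>UNIV. px x * pyx x y * ln (pyx x y / py y)))"

definition K_h :: "(real \<Rightarrow> real) \<Rightarrow> real" where
  "K_h p = min (MI_bsc (1/3) (p (1/2)))
               (2/3 * KL_bern (1/3 * (1 - p (1/2)) + 2/3 * p (1/2)) (p (1/2)))"

end

theory Submission
  imports Defs
begin


definition F :: "real \<Rightarrow> real" where "F x = x * ln (x / (1 - x))"
definition ent :: "real \<Rightarrow> real" where "ent x = - (x * ln x) - (1 - x) * ln (1 - x)"

lemma xlnx_ge: fixes c :: real assumes "0 < c" shows "c * ln c \<ge> c - 1"
proof -
  have "ln (1/c) \<le> 1/c - 1" using assms by (intro ln_le_minus_one) simp
  hence "- ln c \<le> 1/c - 1" using assms by (simp add: ln_div)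
  hence "c * (- ln c) \<le> c * (1/c - 1)" using assms by (intro mult_left_mono) auto
  thus ?thesis using assms by (simp add: algebra_simps)
qed

lemma wln_tangent: fixes w w0 :: real assumes "0 < w" "0 < w0"
  shows "w * ln w \<ge> w0 * ln w0 + (1 + ln w0) * (w - w0)"
proof -
  have "(w/w0) * ln (w/w0) \<ge> w/w0 - 1" using assms by (intro xlnx_ge) simp
  hence "w0 * ((w/w0) * ln (w/w0)) \<ge> w0 * (w/w0 - 1)" using assms by (intro mult_left_mono) auto
  moreover have "w0 * ((w/w0) * ln (w/w0)) = w * (ln w - ln w0)" using assms by (simp add: ln_div)
  moreover have "w0 * (w/w0 - 1) = w - w0" using assms by (simp add: field_simps)
  ultimately have "w * (ln w - ln w0) \<ge> w - w0" by simp
  thus ?thesis by (simp add: algebra_simps)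
qed

lemma g_tangent: fixes w x :: real assumes "0 \<le> w" "w < 1" "x < 1"
  shows "- w * ln (1 - w) \<ge> - x * ln (1 - x) + (- ln (1 - x) + x / (1 - x)) * (w - x)"
proof -
  have "ln ((1-w)/(1-x)) \<le> (1-w)/(1-x) - 1" using assms by (intro ln_le_minus_one) simp
  hence h: "ln (1-x) - ln (1-w) \<ge> (w - x)/(1-x)" using assms
    by (simp add: ln_div field_simps)
  have "w * (ln (1-x) - ln (1-w)) \<ge> w * ((w - x)/(1-x))" using h assms by (intro mult_left_mono) auto
  moreover have "w * ((w - x)/(1-x)) - x * ((w-x)/(1-x)) \<ge> 0"
  proof -
    have "w * ((w - x)/(1-x)) - x * ((w-x)/(1-x)) = (w-x)^2/(1-x)" using assms by (simp add: diff_divide_distrib[symmetric] power2_eq_square algebra_simps)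
    also have "\<dots> \<ge> 0" using assms by simp
    finally show ?thesis .
  qed
  ultimately show ?thesis by (simp add: algebra_simps)
qed

lemma F_split: fixes c x :: real assumes "0 < c" "0 < x" "c * x < 1"
  shows "F (c*x) = c*x*ln c + c*x*ln x + (- (c*x) * ln (1 - c*x))"
  using assms by (simp add: F_def ln_div ln_mult algebra_simps)

lemma bin_in:
  fixes x P1 P0 c1 c0 :: real
  assumes "0 < x" "x < 1" "0 \<le> P1" "0 \<le> P0" "P1 + P0 = 1" "0 < c1" "0 < c0"
    "P1*c1 + P0*c0 = 1" "c1*x < 1" "c0*x < 1"
  shows "P1 * F (c1*x) + P0 * F (c0*x) - F x \<ge> x * (P1*c1*ln c1 + P0*c0*ln c0)"
proof -
  define d where "d = - ln (1 - x) + x / (1 - x)"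
  have t1: "- (c1*x) * ln (1 - c1*x) \<ge> - x * ln (1 - x) + d * (c1*x - x)"
    unfolding d_def using assms by (intro g_tangent) auto
  have t0: "- (c0*x) * ln (1 - c0*x) \<ge> - x * ln (1 - x) + d * (c0*x - x)"
    unfolding d_def using assms by (intro g_tangent) auto
  have "P1 * (- (c1*x) * ln (1 - c1*x)) + P0 * (- (c0*x) * ln (1 - c0*x))
      \<ge> P1 * (- x * ln (1 - x) + d * (c1*x - x)) + P0 * (- x * ln (1 - x) + d * (c0*x - x))"
    using t1 t0 assms by (intro add_mono mult_left_mono) auto
  also have "P1 * (- x * ln (1 - x) + d * (c1*x - x)) + P0 * (- x * ln (1 - x) + d * (c0*x - x))
     = - x * ln (1 - x) * (P1 + P0) + d * x * ((P1*c1 + P0*c0) - (P1 + P0))"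
    by (simp add: algebra_simps)
  also have "\<dots> = - x * ln (1 - x)" using assms by simp
  finally have G: "P1 * (- (c1*x) * ln (1 - c1*x)) + P0 * (- (c0*x) * ln (1 - c0*x)) \<ge> - x * ln (1 - x)" .
  have Fx: "F x = x * ln x + (- x * ln (1 - x))" using assms by (simp add: F_def ln_div algebra_simps)
  have "P1 * F (c1*x) + P0 * F (c0*x) = x * (P1*c1*ln c1 + P0*c0*ln c0) + x * ln x * (P1*c1 + P0*c0)
      + (P1 * (- (c1*x) * ln (1 - c1*x)) + P0 * (- (c0*x) * ln (1 - c0*x)))"
    using assms(1,6,7,9,10) by (simp add: F_split algebra_simps)
  moreover have "x * ln x * (P1*c1 + P0*c0) = x * ln x" by (simp add: assms(8))
  ultimately show ?thesis using G Fx by linarith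
qed

lemma bin_Q:
  fixes z P1 P0 b1 b0 :: real
  assumes "0 < z" "z < 1" "0 \<le> P1" "0 \<le> P0" "P1 + P0 = 1" "0 < b1" "0 < b0"
    "P1*b1 + P0*b0 = 1" "b1*z < 1" "b0*z < 1"
  shows "P1 * F (1 - b1*z) + P0 * F (1 - b0*z) - F (1 - z)
     \<ge> - (P1 * ln b1 + P0 * ln b0) + z * (P1*b1*ln b1 + P0*b0*ln b0)"
proof -
  define d where "d = 1 + ln (1 - z)"
  have t1: "(1 - b1*z) * ln (1 - b1*z) \<ge> (1 - z) * ln (1 - z) + d * ((1 - b1*z) - (1 - z))"
    unfolding d_def using assms by (intro wln_tangent) auto
  have t0: "(1 - b0*z) * ln (1 - b0*z) \<ge> (1 - z) * ln (1 - z) + d * ((1 - b0*z) - (1 - z))"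
    unfolding d_def using assms by (intro wln_tangent) auto
  have "P1 * ((1 - b1*z) * ln (1 - b1*z)) + P0 * ((1 - b0*z) * ln (1 - b0*z))
      \<ge> P1 * ((1 - z) * ln (1 - z) + d * ((1 - b1*z) - (1 - z))) + P0 * ((1 - z) * ln (1 - z) + d * ((1 - b0*z) - (1 - z)))"
    using t1 t0 assms by (intro add_mono mult_left_mono) auto
  also have "P1 * ((1 - z) * ln (1 - z) + d * ((1 - b1*z) - (1 - z))) + P0 * ((1 - z) * ln (1 - z) + d * ((1 - b0*z) - (1 - z)))
     = (1 - z) * ln (1 - z) * (P1 + P0) + d * z * ((P1 + P0) - (P1*b1 + P0*b0))"
    by (simp add: algebra_simps)
  also have "\<dots> = (1 - z) * ln (1 - z)" using assms by simp
  finally have G: "P1 * ((1 - b1*z) * ln (1 - b1*z)) + P0 * ((1 - b0*z) * ln (1 - b0*z)) \<ge> (1 - z) * ln (1 - z)" .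
  have Fb: "F (1 - b*z) = (1 - b*z) * ln (1 - b*z) - ln b - ln z + b*z*ln b + b*z*ln z"
    if "0 < b" "b * z < 1" for b
    using that assms by (simp add: F_def ln_div ln_mult algebra_simps)
  have Fv: "F (1 - z) = (1 - z) * ln (1 - z) - ln z + z * ln z"
    using assms by (simp add: F_def ln_div algebra_simps)
  have "P1 * F (1 - b1*z) + P0 * F (1 - b0*z) =
      (P1 * ((1 - b1*z) * ln (1 - b1*z)) + P0 * ((1 - b0*z) * ln (1 - b0*z)))
      - (P1 * ln b1 + P0 * ln b0) - ln z * (P1 + P0) + z * (P1*b1*ln b1 + P0*b0*ln b0)
      + z * ln z * (P1*b1 + P0*b0)"
    using assms(6,7,9,10) by (simp add: Fb algebra_simps)
  moreover have "z * ln z * (P1*b1 + P0*b0) = z * ln z" by (simp add: assms(8))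
  moreover have "ln z * (P1 + P0) = ln z" by (simp add: assms(5))
  ultimately show ?thesis using G Fv by linarith
qed



lemma alnab: fixes a b :: real assumes "0 < a" "0 < b" shows "a * ln (a/b) \<ge> a - b"
proof -
  have "(a/b) * ln (a/b) \<ge> a/b - 1" using assms by (intro xlnx_ge) simp
  hence "b * ((a/b) * ln (a/b)) \<ge> b * (a/b - 1)" using assms by (intro mult_left_mono) auto
  moreover have "b * ((a/b) * ln (a/b)) = a * ln (a/b)" using assms by simp
  moreover have "b * (a/b - 1) = a - b" using assms by (simp add: field_simps)
  ultimately show ?thesis by simp
qed

lemma KL_nonneg: fixes w u :: real assumes "0 < w" "w < 1" "0 < u" "u < 1"
  shows "KL_bern w u \<ge> 0"
proof -
  have "w * ln (w/u) \<ge> w - u" using assms by (intro alnab) auto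
  moreover have "(1-w) * ln ((1-w)/(1-u)) \<ge> (1-w) - (1-u)" using assms by (intro alnab) auto
  ultimately show ?thesis unfolding KL_bern_def by linarith
qed

lemma ent_tangent: fixes w u :: real assumes "0 < w" "w < 1" "0 < u" "u < 1"
  shows "ent w \<le> ent u + (ln (1-u) - ln u) * (w - u)"
proof -
  have "ent u + (ln (1-u) - ln u) * (w - u) - ent w = KL_bern w u"
    using assms by (simp add: KL_bern_def ent_def ln_div algebra_simps)
  thus ?thesis using KL_nonneg[OF assms] by linarith
qed

lemma ent_deriv: fixes x :: real assumes "0 < x" "x < 1"
  shows "(ent has_real_derivative (ln (1-x) - ln x)) (at x)"
proof -
  have "((\<lambda>x. - (x * ln x) - (1 - x) * ln (1 - x)) has_real_derivative (ln (1-x) - ln x)) (at x)"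
    using assms by (auto intro!: derivative_eq_intros)
  thus ?thesis unfolding ent_def[abs_def] .
qed

lemma MI_bsc_ent: fixes s q :: real assumes "0 \<le> s" "s \<le> 1" "0 < q" "q < 1"
  shows "MI_bsc s q = ent (s*(1-q) + (1-s)*q) - ent q"
proof -
  define u where "u = s*(1-q) + (1-s)*q"
  have a1: "0 \<le> s*(1-q)" "0 \<le> (1-s)*q" "0 \<le> s*q" "0 \<le> (1-s)*(1-q)" using assms by auto
  have u0: "0 < u"
  proof (cases "s = 1")
    case True thus ?thesis unfolding u_def using assms by simp
  next
    case False hence "0 < (1-s)*q" using assms by simp
    thus ?thesis unfolding u_def using a1 by linarith
  qed
  have u1: "u < 1"
  proof (cases "s = 1")
    case True thus ?thesis unfolding u_def using assms by simp
  next
    case False hence "0 < (1-s)*(1-q)" using assms by simp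
    moreover have "1 - u = s*q + (1-s)*(1-q)" unfolding u_def by (simp add: algebra_simps)
    ultimately show ?thesis using a1 by linarith
  qed
  have py1: "s * (1 - q) + (1 - s) * q = u" by (simp add: u_def)
  have py0: "s * q + (1 - s) * (1 - q) = 1 - u" by (simp add: u_def algebra_simps)
  define lu where "lu = ln u"
  define lv where "lv = ln (1 - u)"
  define lq where "lq = ln q"
  define lr where "lr = ln (1 - q)"
  have l1: "ln ((1 - q) / (1 - u)) = lr - lv" unfolding lr_def lv_def using assms u1 by (simp add: ln_div)
  have l2: "ln (q / u) = lq - lu" unfolding lq_def lu_def using assms u0 by (simp add: ln_div)
  have l3: "ln (q / (1 - u)) = lq - lv" unfolding lq_def lv_def using assms u1 by (simp add: ln_div)
  have l4: "ln ((1 - q) / u) = lr - lu" unfolding lr_def lu_def using assms u0 by (simp add: ln_div)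
  have "MI_bsc s q = (1 - s) * (1 - q) * (lr - lv) + ((1 - s) * q * (lq - lu) + 0) +
     (s * q * (lq - lv) + (s * (1 - q) * (lr - lu) + 0) + 0)"
    unfolding MI_bsc_def Let_def UNIV_bool
    apply (simp only: sum.insert finite.intros insert_iff empty_iff simp_thms sum.empty if_True if_False)
    apply (simp only: py1 py0 l1 l2 l3 l4)
    done
  also have "\<dots> = (- u * lu - (1 - u) * lv) - (- q * lq - (1 - q) * lr)"
    unfolding u_def by (simp add: algebra_simps)
  also have "\<dots> = ent u - ent q" unfolding ent_def lu_def lv_def lq_def lr_def by simp
  finally show ?thesis unfolding u_def .
qed

lemma ent_sym: "ent (1 - x) = ent x" by (simp add: ent_def algebra_simps)

lemma ln_mono_le: fixes a b :: real assumes "0 < a" "a \<le> b" shows "ln a \<le> ln b"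
  using assms by simp

lemma stepA_s: fixes s q :: real
  assumes "1/3 \<le> s" "s \<le> 2/3" "0 < q" "q < 1/2"
  shows "ent ((1+q)/3) \<le> ent (s*(1-q) + (1-s)*q)"
proof -
  define u where "u = s*(1-q) + (1-s)*q"
  have ueq: "u = q + s*(1-2*q)" unfolding u_def by (simp add: algebra_simps)
  have m13: "(1/3)*(1-2*q) \<le> s*(1-2*q)" using assms by (intro mult_right_mono) auto
  have lo: "(1+q)/3 \<le> u" unfolding ueq using m13 by (simp add: field_simps)
  have m23: "s*(1-2*q) \<le> (2/3)*(1-2*q)" using assms by (intro mult_right_mono) auto
  have hi: "u \<le> (2-q)/3" unfolding ueq using m23 by (simp add: field_simps)
  have u0: "0 < u" "u < 1" using lo hi assms by auto
  show ?thesis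
  proof (cases "s \<le> 1/2")
    case True
    have "s*(1-2*q) \<le> (1/2)*(1-2*q)" using True assms by (intro mult_right_mono) auto
    hence "u \<le> 1/2" unfolding ueq by (simp add: field_simps)
    hence D: "ln (1-u) - ln u \<ge> 0" using u0 by simp
    have "ent ((1+q)/3) \<le> ent u + (ln (1-u) - ln u) * ((1+q)/3 - u)"
      using u0 assms by (intro ent_tangent) auto
    also have "(ln (1-u) - ln u) * ((1+q)/3 - u) \<le> 0" using D lo by (intro mult_nonneg_nonpos) auto
    finally show ?thesis unfolding u_def by simp
  next
    case False
    have "(1/2)*(1-2*q) \<le> s*(1-2*q)" using False assms by (intro mult_right_mono) auto
    hence "u \<ge> 1/2" unfolding ueq by (simp add: field_simps)
    hence D: "ln (1-u) - ln u \<le> 0" using u0 by simp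
    have "ent ((2-q)/3) \<le> ent u + (ln (1-u) - ln u) * ((2-q)/3 - u)"
      using u0 assms by (intro ent_tangent) auto
    also have "(ln (1-u) - ln u) * ((2-q)/3 - u) \<le> 0" using D hi by (intro mult_nonpos_nonneg) auto
    finally have "ent ((2-q)/3) \<le> ent u" by simp
    moreover have "ent ((2-q)/3) = ent ((1+q)/3)" using ent_sym[of "(1+q)/3"] by (simp add: field_simps)
    ultimately show ?thesis unfolding u_def by simp
  qed
qed

lemma stepB_s: fixes s q :: real
  assumes "1/3 \<le> s" "s \<le> 1" "0 < q" "q < 1/2"
  shows "KL_bern ((1+q)/3) q \<le> KL_bern (s*(1-q) + (1-s)*q) q"
proof -
  define u where "u = s*(1-q) + (1-s)*q"
  define a where "a = (1+q)/3"
  have ueq: "u = q + s*(1-2*q)" unfolding u_def by (simp add: algebra_simps)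
  have m13: "(1/3)*(1-2*q) \<le> s*(1-2*q)" using assms by (intro mult_right_mono) auto
  have lo: "a \<le> u" unfolding ueq a_def using m13 by (simp add: field_simps)
  have m1: "s*(1-2*q) \<le> 1*(1-2*q)" using assms by (intro mult_right_mono) auto
  have hi: "u \<le> 1 - q" unfolding ueq using m1 by (simp add: field_simps)
  have a0: "q \<le> a" "a < 1/2" unfolding a_def using assms by auto
  have u0: "0 < u" "u < 1" using lo hi a0 assms by auto
  have KLe: "KL_bern w q = - ent w - w * ln q - (1-w) * ln (1-q)" if "0 < w" "w < 1" for w
    using that assms by (simp add: KL_bern_def ent_def ln_div algebra_simps)
  have T: "ent u \<le> ent a + (ln (1-a) - ln a) * (u - a)"
    using u0 a0 assms by (intro ent_tangent) auto
  have "ln a \<ge> ln q" "ln (1-a) \<le> ln (1-q)" using a0 assms by auto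
  hence "(u - a) * ((ln (1-q) - ln q) - (ln (1-a) - ln a)) \<ge> 0" using lo by auto
  hence "KL_bern u q - KL_bern a q \<ge> 0"
    using T KLe[of u] KLe[of a] u0 a0 assms by (simp add: algebra_simps)
  thus ?thesis unfolding a_def u_def by simp
qed

lemma stepA_q: fixes q p0 :: real
  assumes "0 < q" "q \<le> p0" "p0 < 1/2"
  shows "ent ((1+p0)/3) - ent p0 \<le> ent ((1+q)/3) - ent q"
proof -
  have "(\<lambda>x. ent ((1+x)/3) - ent x) p0 \<le> (\<lambda>x. ent ((1+x)/3) - ent x) q"
  proof (rule DERIV_nonpos_imp_nonincreasing[OF assms(2)])
    fix x :: real assume x: "q \<le> x" "x \<le> p0"
    define u where "u = (1+x)/3"
    have x0: "0 < x" "x < 1/2" using x assms by auto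
    have u0: "x < u" "u \<le> 1/2" unfolding u_def using x0 by auto
    have d1: "((\<lambda>x. (1+x)/3) has_real_derivative 1/3) (at x)"
      by (auto intro!: derivative_eq_intros)
    have d2: "(ent has_real_derivative (ln (1-u) - ln u)) (at ((1+x)/3))"
      unfolding u_def using x0 by (intro ent_deriv) auto
    have D: "((\<lambda>x. ent ((1+x)/3) - ent x) has_real_derivative
        ((ln (1-u) - ln u) * (1/3) - (ln (1-x) - ln x))) (at x)"
      using DERIV_chain2[OF d2 d1] ent_deriv[of x] x0 by (auto intro!: derivative_eq_intros)
    have "ln (1-u) - ln u \<ge> 0" using u0 x0 by simp
    moreover have "ln (1-u) \<le> ln (1-x)" "ln x \<le> ln u" using u0 x0 by auto
    ultimately have "(ln (1-u) - ln u) * (1/3) - (ln (1-x) - ln x) \<le> 0" by (simp add: algebra_simps)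
    thus "\<exists>y. ((\<lambda>x. ent ((1+x)/3) - ent x) has_real_derivative y) (at x) \<and> y \<le> 0"
      using D by blast
  qed
  thus ?thesis by simp
qed

lemma stepB_q: fixes q p0 :: real
  assumes "0 < q" "q \<le> p0" "p0 < 1/2"
  shows "KL_bern ((1+p0)/3) p0 \<le> KL_bern ((1+q)/3) q"
proof -
  define k where "k = (\<lambda>x::real. - ent ((1+x)/3) - ((1+x)/3) * ln x - (1 - (1+x)/3) * ln (1-x))"
  have KLg: "KL_bern b x = - ent b - b * ln x - (1-b) * ln (1-x)" if "0 < x" "x < 1" "0 < b" "b < 1" for b x
    using that by (simp add: KL_bern_def ent_def ln_div algebra_simps)
  have KLe: "KL_bern ((1+x)/3) x = k x" if "0 < x" "x < 1/2" for x
    using that KLg[of x "(1+x)/3"] unfolding k_def by simp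
  have "k p0 \<le> k q"
  proof (rule DERIV_nonpos_imp_nonincreasing[OF assms(2)])
    fix x :: real assume x: "q \<le> x" "x \<le> p0"
    define a where "a = (1+x)/3"
    have x0: "0 < x" "x < 1/2" using x assms by auto
    have a0: "x < a" "a \<le> 1/2" unfolding a_def using x0 by auto
    have d1: "((\<lambda>x. (1+x)/3) has_real_derivative 1/3) (at x)"
      by (auto intro!: derivative_eq_intros)
    have d2: "(ent has_real_derivative (ln (1-a) - ln a)) (at ((1+x)/3))"
      unfolding a_def using x0 by (intro ent_deriv) auto
    have d3: "((\<lambda>x. ent ((1+x)/3)) has_real_derivative (ln (1-a) - ln a) * (1/3)) (at x)"
      using DERIV_chain2[OF d2 d1] by simp
    define Dk where "Dk = - ((ln (1-a) - ln a) * (1/3)) - ((1/3) * ln x + a * (1/x))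
        - (- (1/3) * ln (1-x) + (1 - a) * (- 1/(1-x)))"
    have D: "(k has_real_derivative Dk) (at x)"
      unfolding k_def Dk_def a_def using x0
      apply (auto intro!: derivative_eq_intros d3[unfolded a_def])
      apply (simp add: field_simps)
      done
    have Dk_eq: "Dk = (1/3) * (ln a + ln (1-x) - ln x - ln (1-a)) - (a/x - (1-a)/(1-x))"
      unfolding Dk_def by (simp add: algebra_simps)
    define r where "r = a*(1-x)/(x*(1-a))"
    have r0: "0 < r" unfolding r_def using x0 a0 by auto
    have lnr: "ln r = ln a + ln (1-x) - ln x - ln (1-a)"
      unfolding r_def using x0 a0 by (simp add: ln_div ln_mult)
    have r1: "r - 1 = (1-2*x)/(x*(2-x))"
      unfolding r_def a_def using x0 by (simp add: field_simps)
    have ax: "a/x - (1-a)/(1-x) = (1-2*x)/(3*(x*(1-x)))"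
      unfolding a_def using x0 by (simp add: field_simps)
    have cmp: "(1-2*x)/(x*(2-x)) \<le> (1-2*x)/(x*(1-x))"
      using x0 by (intro divide_left_mono mult_left_mono mult_pos_pos) auto
    have "ln r \<le> r - 1" using r0 by (rule ln_le_minus_one)
    hence L: "ln a + ln (1-x) - ln x - ln (1-a) \<le> (1-2*x)/(x*(2-x))" using lnr r1 by simp
    have "Dk \<le> (1/3) * ((1-2*x)/(x*(2-x))) - (1-2*x)/(3*(x*(1-x)))"
      unfolding Dk_eq ax using mult_left_mono[OF L, of "1/3"] by simp
    also have "\<dots> \<le> 0"
    proof -
      have "(1-2*x)/(3*(x*(1-x))) = (1/3)*((1-2*x)/(x*(1-x)))" by simp
      moreover have "\<And>A C::real. A \<le> C \<Longrightarrow> 1/3*A - 1/3*C \<le> 0" by simp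
      ultimately show ?thesis using cmp by metis
    qed
    finally have "Dk \<le> 0" .
    thus "\<exists>y. (k has_real_derivative y) (at x) \<and> y \<le> 0" using D by blast
  qed
  thus ?thesis using KLe[of p0] KLe[of q] assms by simp
qed



lemma div_eq_iff_nat: fixes j d m :: nat assumes "0 < d"
  shows "j div d = m \<longleftrightarrow> m * d \<le> j \<and> j < (m+1) * d"
proof
  assume "j div d = m"
  thus "m * d \<le> j \<and> j < (m+1) * d" using assms
    by (metis add.commute div_times_less_eq_dividend dividend_less_div_times mult.commute mult_Suc plus_1_eq_Suc)
next
  assume "m * d \<le> j \<and> j < (m+1) * d"
  thus "j div d = m" using assms
    by (metis add.commute div_nat_eqI mult.commute plus_1_eq_Suc)
qed

lemma Hset_mem: "i \<in> Hset L l m \<longleftrightarrow> 1 \<le> i \<and> (i - 1) div 2^(L-l) = m"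
proof -
  have d: "(0::nat) < 2^(L-l)" by simp
  show ?thesis unfolding Hset_def div_eq_iff_nat[OF d] by auto
qed

lemma cells_mem: "i \<in> cells L \<longleftrightarrow> 1 \<le> i \<and> i \<le> 2^L" by (simp add: cells_def)

lemma finite_Hset[simp]: "finite (Hset L l m)" by (simp add: Hset_def)
lemma finite_cells[simp]: "finite (cells L)" by (simp add: cells_def)

lemma Hset_sub_cells: assumes "l \<le> L" "m < 2^l" shows "Hset L l m \<subseteq> cells L"
proof
  fix i assume "i \<in> Hset L l m"
  hence i: "1 \<le> i" "i \<le> (m+1) * 2^(L-l)" by (auto simp: Hset_def)
  have "(m+1) * 2^(L-l) \<le> 2^l * 2^(L-l)" using assms by (intro mult_right_mono) auto
  also have "\<dots> = (2::nat)^L" using assms by (simp add: power_add[symmetric])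
  finally show "i \<in> cells L" using i by (simp add: cells_def)
qed

lemma Hset_div: assumes "l \<le> l'" "l' \<le> L" "i \<in> Hset L l' m'"
  shows "i \<in> Hset L l m \<longleftrightarrow> m = m' div 2^(l'-l)"
proof -
  have "(2::nat)^(L-l) = 2^(L-l') * 2^(l'-l)" using assms by (simp add: power_add[symmetric])
  hence "(i-1) div 2^(L-l) = (i-1) div 2^(L-l') div 2^(l'-l)" by (simp add: div_mult2_eq)
  thus ?thesis using assms(3) unfolding Hset_mem by auto
qed

lemma mass_partition: assumes "l \<le> L"
  shows "mass f (cells L) = (\<Sum>m<2^l. mass f (Hset L l m))"
proof -
  define g where "g i = (i - 1) div 2^(L-l)" for i :: nat
  have img: "g ` cells L \<subseteq> {..<2^l}"
  proof
    fix m assume "m \<in> g ` cells L"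
    then obtain i where i: "i \<in> cells L" "m = g i" by auto
    have "i - 1 < 2^L" using i by (auto simp: cells_def)
    also have "(2::nat)^L = 2^l * 2^(L-l)" using assms by (simp add: power_add[symmetric])
    finally have "(i-1) div 2^(L-l) < 2^l" by (simp add: less_mult_imp_div_less)
    thus "m \<in> {..<2^l}" using i by (simp add: g_def)
  qed
  have eq: "{x \<in> cells L. g x = m} = Hset L l m" if "m < 2^l" for m
    using Hset_sub_cells[OF assms that] unfolding g_def by (auto simp: Hset_mem cells_mem)
  have "mass f (cells L) = (\<Sum>m<2^l. sum f {x \<in> cells L. g x = m})"
    unfolding mass_def by (rule sum.group[symmetric]) (use img in auto)
  also have "\<dots> = (\<Sum>m<2^l. mass f (Hset L l m))"
    by (rule sum.cong) (auto simp: eq mass_def)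
  finally show ?thesis .
qed

lemma Hset_split: assumes "l < L"
  shows "Hset L l m = Hset L (l+1) (2*m) \<union> Hset L (l+1) (2*m+1)"
    "Hset L (l+1) (2*m) \<inter> Hset L (l+1) (2*m+1) = {}"
proof -
  have *: "i \<in> Hset L l m \<longleftrightarrow> 1 \<le> i \<and> (i-1) div 2^(L-(l+1)) div 2 = m" for i
  proof -
    have "L - l = Suc (L - (l+1))" using assms by arith
    hence "(2::nat)^(L-l) = 2^(L-(l+1)) * 2" by simp
    thus ?thesis unfolding Hset_mem by (simp add: div_mult2_eq)
  qed
  show "Hset L l m = Hset L (l+1) (2*m) \<union> Hset L (l+1) (2*m+1)"
  proof -
    have k: "(k::nat) div 2 = m \<longleftrightarrow> k = 2*m \<or> k = 2*m+1" for k by presburger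
    show ?thesis unfolding set_eq_iff * k by (auto simp: Hset_mem)
  qed
  show "Hset L (l+1) (2*m) \<inter> Hset L (l+1) (2*m+1) = {}"
    by (auto simp: Hset_mem)
qed

lemma mass_split: assumes "l < L"
  shows "mass f (Hset L l m) = mass f (Hset L (l+1) (2*m)) + mass f (Hset L (l+1) (2*m+1))"
  unfolding mass_def Hset_split(1)[OF assms]
  by (rule sum.union_disjoint) (use Hset_split(2)[OF assms] in auto)

lemma card_Hset: "card (Hset L l m) = 2^(L-l)"
  by (simp add: Hset_def algebra_simps)



definition pdist :: "nat \<Rightarrow> (nat \<Rightarrow> real) \<Rightarrow> bool" where
  "pdist L \<pi> \<longleftrightarrow> (\<forall>i\<in>cells L. 0 < \<pi> i) \<and> mass \<pi> (cells L) = 1"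

lemma mass_pos: assumes "pdist L \<pi>" "l \<le> L" "m < 2^l" shows "0 < mass \<pi> (Hset L l m)"
proof -
  have i: "m * 2^(L-l) + 1 \<in> Hset L l m" by (simp add: Hset_def)
  show ?thesis unfolding mass_def
    using Hset_sub_cells[OF assms(2,3)] assms(1) i
    by (intro sum_pos2[OF finite_Hset i]) (auto simp: pdist_def less_imp_le)
qed

lemma mass_lt1: assumes "pdist L \<pi>" "1 \<le> l" "l \<le> L" "m < 2^l" shows "mass \<pi> (Hset L l m) < 1"
proof -
  have sub: "Hset L l m \<subseteq> cells L" by (rule Hset_sub_cells[OF assms(3,4)])
  obtain i where i: "i \<in> cells L" "i \<notin> Hset L l m"
  proof (cases "m = 0")
    case True
    have "(2::nat)^(L-l) < 2^L" using assms by (intro power_strict_increasing) auto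
    hence "2^L \<notin> Hset L l m" using True by (auto simp: Hset_def)
    moreover have "2^L \<in> cells L" by (simp add: cells_def)
    ultimately show ?thesis using that by blast
  next
    case False
    have "1 \<notin> Hset L l m" using False by (auto simp: Hset_def)
    moreover have "1 \<in> cells L" by (simp add: cells_def)
    ultimately show ?thesis using that by blast
  qed
  have pos: "\<And>j. j \<in> cells L \<Longrightarrow> 0 < \<pi> j" using assms(1) by (auto simp: pdist_def)
  have "mass \<pi> (cells L) = sum \<pi> (cells L - Hset L l m) + mass \<pi> (Hset L l m)"
    unfolding mass_def using sub by (simp add: sum.subset_diff)
  moreover have "\<pi> i \<le> sum \<pi> (cells L - Hset L l m)"
    using i pos by (intro member_le_sum) (auto intro: less_imp_le)
  ultimately show ?thesis using assms(1) pos[OF i(1)] by (auto simp: pdist_def)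
qed

lemma hq_props:
  assumes "pdist L \<pi>" "1 \<le> L" "hie_query L \<pi> S"
  obtains l' m' where "S = Hset L l' m'" "1 \<le> l'" "l' \<le> L" "m' < 2^l'"
    "1/3 \<le> mass \<pi> S" "l' < L \<Longrightarrow> mass \<pi> S \<le> 2/3"
proof -
  obtain ls ms l' m' where ls: "ls \<le> L" "ms < 2^ls"
    and ex: "\<exists>m<2^ls. mass \<pi> (Hset L ls m) \<ge> 1/2"
    and deep: "\<forall>l2. ls < l2 \<and> l2 \<le> L \<longrightarrow> (\<forall>m<2^l2. mass \<pi> (Hset L l2 m) < 1/2)"
    and mx: "\<forall>m<2^ls. mass \<pi> (Hset L ls m) \<le> mass \<pi> (Hset L ls ms)"
    and cand: "(l', m') \<in> hie_candidates L ls ms"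
    and best: "\<forall>(l2, m2)\<in>hie_candidates L ls ms.
            \<bar>mass \<pi> (Hset L l' m') - 1/2\<bar> \<le> \<bar>mass \<pi> (Hset L l2 m2) - 1/2\<bar>"
    and S: "S = Hset L l' m'"
    using assms(3) unfolding hie_query_def by blast
  have ls1: "1 \<le> ls"
  proof (rule ccontr)
    assume "\<not> 1 \<le> ls"
    hence "ls = 0" by simp
    hence "mass \<pi> (Hset L 1 0) < 1/2" "mass \<pi> (Hset L 1 1) < 1/2" using deep assms(2) by auto
    moreover have "mass \<pi> (cells L) = mass \<pi> (Hset L 1 0) + mass \<pi> (Hset L 1 1)"
      using mass_partition[OF assms(2), of \<pi>] by (simp add: numeral_2_eq_2)
    ultimately show False using assms(1) by (simp add: pdist_def)
  qed
  define x0 where "x0 = mass \<pi> (Hset L ls ms)"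
  have x0: "1/2 \<le> x0" using ex mx unfolding x0_def by force
  show ?thesis
  proof (cases "ls < L")
    case False
    hence "hie_candidates L ls ms = {(ls, ms)}" by (simp add: hie_candidates_def)
    hence "l' = ls" "m' = ms" using cand by auto
    thus ?thesis using that S ls ls1 x0 False unfolding x0_def by auto
  next
    case True
    define c0 where "c0 = mass \<pi> (Hset L (ls+1) (2*ms))"
    define c1 where "c1 = mass \<pi> (Hset L (ls+1) (2*ms+1))"
    have sum: "x0 = c0 + c1" unfolding x0_def c0_def c1_def by (rule mass_split[OF True])
    have b0: "2*ms < 2^(ls+1)" "2*ms+1 < 2^(ls+1)" using ls by auto
    have c0: "c0 < 1/2" unfolding c0_def using deep True b0 by auto
    have c1: "c1 < 1/2" unfolding c1_def using deep True b0 by auto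
    have C: "hie_candidates L ls ms = {(ls, ms), (ls+1, 2*ms), (ls+1, 2*ms+1)}"
      using True by (auto simp: hie_candidates_def)
    define s where "s = mass \<pi> (Hset L l' m')"
    have a1: "\<bar>s - 1/2\<bar> \<le> \<bar>x0 - 1/2\<bar>" "\<bar>s - 1/2\<bar> \<le> \<bar>c0 - 1/2\<bar>" "\<bar>s - 1/2\<bar> \<le> \<bar>c1 - 1/2\<bar>"
      using best unfolding C s_def x0_def c0_def c1_def by auto
    have cs: "(l' = ls \<and> m' = ms) \<or> (l' = ls+1 \<and> m' = 2*ms) \<or> (l' = ls+1 \<and> m' = 2*ms+1)"
      using cand C by auto
    have sv: "s = x0 \<or> s = c0 \<or> s = c1" using cs unfolding s_def x0_def c0_def c1_def by auto
    have "1/3 \<le> s \<and> s \<le> 2/3" using sv a1 x0 c0 c1 sum by linarith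
    moreover have "l' \<le> L" "1 \<le> l'" "m' < 2^l'" using cs True ls1 ls b0 by auto
    ultimately show ?thesis using that S unfolding s_def by auto
  qed
qed



definition al :: "real \<Rightarrow> bool \<Rightarrow> real" where "al q y = (if y then 1 - q else q)"
definition be :: "real \<Rightarrow> bool \<Rightarrow> real" where "be q y = (if y then q else 1 - q)"

definition qn :: "nat \<Rightarrow> (real \<Rightarrow> real) \<Rightarrow> nat set \<Rightarrow> real" where
  "qn L p S = p (real (card S) / 2^L)"

lemma lik_eq: "lik L p S y i = (if i \<in> S then al (qn L p S) y else be (qn L p S) y)"
  by (auto simp: lik_def al_def be_def qn_def Let_def)

lemma qval: assumes "l' \<le> L" shows "real (card (Hset L l' m')) / 2^L = 1 / 2^l'"
proof -
  have "(2::real)^L = 2^(L-l') * 2^l'" using assms by (simp add: power_add[symmetric])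
  thus ?thesis by (simp add: card_Hset)
qed

lemma mass_lik: assumes "finite A"
  shows "mass (\<lambda>i. \<pi> i * lik L p S y i) A
     = al (qn L p S) y * mass \<pi> (A \<inter> S) + be (qn L p S) y * mass \<pi> (A - S)"
proof -
  have "mass (\<lambda>i. \<pi> i * lik L p S y i) A = mass (\<lambda>i. \<pi> i * lik L p S y i) (A \<inter> S)
       + mass (\<lambda>i. \<pi> i * lik L p S y i) (A - S)"
    unfolding mass_def using assms by (rule sum.Int_Diff)
  also have "mass (\<lambda>i. \<pi> i * lik L p S y i) (A \<inter> S) = al (qn L p S) y * mass \<pi> (A \<inter> S)"
    unfolding mass_def sum_distrib_left by (rule sum.cong) (auto simp: lik_eq)
  also have "mass (\<lambda>i. \<pi> i * lik L p S y i) (A - S) = be (qn L p S) y * mass \<pi> (A - S)"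
    unfolding mass_def sum_distrib_left by (rule sum.cong) (auto simp: lik_eq)
  finally show ?thesis .
qed

lemma prob_obs_eq: assumes "pdist L \<pi>" "S \<subseteq> cells L"
  shows "prob_obs L p \<pi> S y = al (qn L p S) y * mass \<pi> S + be (qn L p S) y * (1 - mass \<pi> S)"
proof -
  have "prob_obs L p \<pi> S y = mass (\<lambda>i. \<pi> i * lik L p S y i) (cells L)"
    by (simp add: prob_obs_def mass_def)
  also have "\<dots> = al (qn L p S) y * mass \<pi> (cells L \<inter> S) + be (qn L p S) y * mass \<pi> (cells L - S)"
    by (rule mass_lik) simp
  also have "cells L \<inter> S = S" using assms by auto
  also have "mass \<pi> (cells L - S) = 1 - mass \<pi> S"
    using assms unfolding mass_def pdist_def by (simp add: sum_diff)
  finally show ?thesis .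
qed

lemma mass_post: assumes "finite A"
  shows "mass (post L p \<pi> S y) A
     = (al (qn L p S) y * mass \<pi> (A \<inter> S) + be (qn L p S) y * mass \<pi> (A - S)) / prob_obs L p \<pi> S y"
proof -
  have "mass (post L p \<pi> S y) A = mass (\<lambda>i. \<pi> i * lik L p S y i) A / prob_obs L p \<pi> S y"
    unfolding mass_def post_def by (simp add: sum_divide_distrib)
  thus ?thesis using mass_lik[OF assms] by simp
qed

lemma prob_obs_pos: assumes "pdist L \<pi>" "S \<subseteq> cells L" "0 < qn L p S" "qn L p S < 1"
    "0 \<le> mass \<pi> S" "mass \<pi> S \<le> 1"
  shows "0 < prob_obs L p \<pi> S y"
proof -
  define s where "s = mass \<pi> S"
  define q where "q = qn L p S"
  have "0 < al q y * s + be q y * (1 - s)"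
  proof (cases "s = 0")
    case True thus ?thesis using assms unfolding q_def al_def be_def by auto
  next
    case False
    hence "0 < s" using assms unfolding s_def by auto
    moreover have "0 < al q y" "0 \<le> be q y" "0 \<le> 1 - s"
      using assms unfolding q_def s_def al_def be_def by auto
    ultimately show ?thesis by (simp add: add_pos_nonneg)
  qed
  thus ?thesis using prob_obs_eq[OF assms(1,2)] unfolding s_def q_def by simp
qed

lemma dist_post: assumes "pdist L \<pi>" "S \<subseteq> cells L" "0 < qn L p S" "qn L p S < 1"
  shows "pdist L (post L p \<pi> S y)"
proof -
  have m0: "0 \<le> mass \<pi> S" unfolding mass_def using assms(1,2)
    by (intro sum_nonneg) (auto simp: pdist_def less_imp_le)
  have m1: "mass \<pi> S \<le> 1"
  proof -
    have "mass \<pi> S \<le> mass \<pi> (cells L)" unfolding mass_def using assms(1,2)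
      by (intro sum_mono2) (auto simp: pdist_def less_imp_le)
    thus ?thesis using assms(1) by (simp add: pdist_def)
  qed
  have P: "0 < prob_obs L p \<pi> S y" using prob_obs_pos[OF assms m0 m1] .
  have pos: "0 < post L p \<pi> S y i" if "i \<in> cells L" for i
  proof -
    have "0 < lik L p S y i" using assms unfolding lik_eq al_def be_def by auto
    thus ?thesis unfolding post_def using P assms(1) that by (auto simp: pdist_def)
  qed
  have "mass (post L p \<pi> S y) (cells L) = prob_obs L p \<pi> S y / prob_obs L p \<pi> S y"
    using mass_post[of "cells L" L p \<pi> S y] prob_obs_eq[OF assms(1,2), of p y]
    assms(2) by (simp add: Int_absorb1 mass_def pdist_def sum_diff) (metis assms(1) pdist_def mass_def)
  thus ?thesis using pos P by (simp add: pdist_def)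
qed

lemma reach_dist: assumes "reach L p t \<pi>" "1 \<le> L" "\<forall>x\<in>{0<..<1}. 0 < p x \<and> p x < 1/2"
  shows "pdist L \<pi>"
  using assms(1)
proof induction
  case init
  have "card (cells L) = 2^L" by (simp add: cells_def)
  thus ?case by (simp add: pdist_def mass_def cells_def)
next
  case (step t \<pi> S y)
  obtain l' m' where S: "S = Hset L l' m'" "1 \<le> l'" "l' \<le> L" "m' < 2^l'"
    using hq_props[OF step.IH assms(2) step.hyps(2)] by blast
  have sub: "S \<subseteq> cells L" using S Hset_sub_cells by auto
  have "qn L p S = p (1/2^l')" unfolding qn_def S using qval[OF S(3)] by simp
  moreover have "1/2^l' \<in> {0<..<(1::real)}" using S(2) by simp
  moreover have "0 < p (1/2^l') \<and> p (1/2^l') < 1/2" using assms(3) calculation(2) by blast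
  ultimately have "0 < qn L p S" "qn L p S < 1" by auto
  thus ?case using dist_post[OF step.IH sub] by blast
qed



lemma Unest_eq: "Unest L l \<pi> = (\<Sum>m<2^l. F (mass \<pi> (Hset L l m)))"
  unfolding Unest_def F_def
  using sum.atLeast1_atMost_eq[of "\<lambda>q. mass \<pi> (Hset L l (q - 1)) *
        ln (mass \<pi> (Hset L l (q - 1)) / (1 - mass \<pi> (Hset L l (q - 1))))" "2^l"]
  by simp

lemma finalA: fixes s q p0 :: real
  assumes "1/3 \<le> s" "s \<le> 2/3" "0 < q" "q \<le> p0" "p0 < 1/2"
  shows "MI_bsc (1/3) p0 \<le> MI_bsc s q"
proof -
  have e: "1/3 * (1 - p0) + (1 - 1/3) * p0 = (1+p0)/3" by (simp add: field_simps)
  have "MI_bsc (1/3) p0 = ent ((1+p0)/3) - ent p0"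
    using MI_bsc_ent[of "1/3" p0] assms unfolding e by simp
  also have "\<dots> \<le> ent ((1+q)/3) - ent q" using stepA_q assms by simp
  also have "\<dots> \<le> ent (s*(1-q) + (1-s)*q) - ent q" using stepA_s[of s q] assms by simp
  also have "\<dots> = MI_bsc s q" using MI_bsc_ent[of s q] assms by simp
  finally show ?thesis .
qed

lemma finalB: fixes s q p0 :: real
  assumes "1/3 \<le> s" "s \<le> 1" "0 < q" "q \<le> p0" "p0 < 1/2"
  shows "2/3 * KL_bern (1/3 * (1 - p0) + 2/3 * p0) p0 \<le> KL_bern (s*(1-q) + (1-s)*q) q"
proof -
  have e: "1/3 * (1 - p0) + 2/3 * p0 = (1+p0)/3" by (simp add: field_simps)
  have k0: "0 \<le> KL_bern ((1+p0)/3) p0" using assms by (intro KL_nonneg) auto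
  have "2/3 * KL_bern ((1+p0)/3) p0 \<le> KL_bern ((1+p0)/3) p0" using k0 by simp
  also have "\<dots> \<le> KL_bern ((1+q)/3) q" using stepB_q assms by simp
  also have "\<dots> \<le> KL_bern (s*(1-q) + (1-s)*q) q" using stepB_s[of s q] assms by simp
  finally show ?thesis unfolding e .
qed



theorem lemma8:
  fixes p :: "real \<Rightarrow> real" and L l t :: nat and \<pi> :: "nat \<Rightarrow> real" and S :: "nat set"
  assumes "continuous_on {0<..<1} p"
    and "mono_on {0<..<1} p"
    and "\<forall>x\<in>{0<..<1}. 0 < p x \<and> p x < 1/2"
    and "1 \<le> l" and "l < L"
    and "0 < t"
    and "reach L p t \<pi>"
    and "hie_query L \<pi> S"
  shows "(\<Sum>y\<in>UNIV. prob_obs L p \<pi> S y * Unest L l (post L p \<pi> S y)) - Unest L l \<pi> \<ge> K_h p"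
proof -
  have L1: "1 \<le> L" using assms by simp
  have D: "pdist L \<pi>" using reach_dist[OF assms(7) L1 assms(3)] .
  obtain l' m' where S: "S = Hset L l' m'" "1 \<le> l'" "l' \<le> L" "m' < 2^l'"
    and s13: "1/3 \<le> mass \<pi> S" and s23: "l' < L \<Longrightarrow> mass \<pi> S \<le> 2/3"
    using hq_props[OF D L1 assms(8)] by blast
  have sub: "S \<subseteq> cells L" using S Hset_sub_cells by auto
  define q where "q = qn L p S"
  define p0 where "p0 = p (1/2)"
  have qeq: "q = p (1/2^l')" unfolding q_def qn_def S using qval[OF S(3)] by simp
  have mem: "1/2^l' \<in> {0<..<(1::real)}" using S(2) by simp
  have half: "(1/2::real) \<in> {0<..<1}" by simp
  have q0: "0 < q" "q < 1/2" using assms(3) mem unfolding qeq by auto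
  have p00: "p0 < 1/2" using assms(3) half unfolding p0_def by auto
  have "(1::real)/2^l' \<le> 1/2"
  proof -
    have "(2::real) \<le> 2^l'" using S(2) by (metis power_one_right power_increasing one_le_numeral)
    thus ?thesis by (simp add: field_simps)
  qed
  hence qp0: "q \<le> p0" unfolding qeq p0_def using mono_onD[OF assms(2) mem half] by simp
  define s where "s = mass \<pi> S"
  have s1: "s \<le> 1"
  proof -
    have "mass \<pi> S \<le> mass \<pi> (cells L)" unfolding mass_def using D sub
      by (intro sum_mono2) (auto simp: pdist_def less_imp_le)
    thus ?thesis using D by (simp add: pdist_def s_def)
  qed
  define P where "P y = prob_obs L p \<pi> S y" for y
  define pt where "pt y = post L p \<pi> S y" for y
  have Peq: "P y = al q y * s + be q y * (1 - s)" for y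
    unfolding P_def q_def s_def by (rule prob_obs_eq[OF D sub])
  have Ppos: "0 < P y" for y
    unfolding P_def using prob_obs_pos[OF D sub] q0 s13 s1 unfolding q_def s_def by auto
  have Psum: "P True + P False = 1" unfolding Peq al_def be_def by (simp add: algebra_simps)
  have PT: "P True = s*(1-q) + (1-s)*q" unfolding Peq al_def be_def by (simp add: algebra_simps)
  have Dpt: "pdist L (pt y)" for y unfolding pt_def q_def
    using dist_post[OF D sub] q0 unfolding q_def by auto
  define B where "B m = Hset L l m" for m
  define x where "x m = mass \<pi> (B m)" for m
  define x' where "x' y m = mass (pt y) (B m)" for y m
  have x01: "0 < x m" "x m < 1" if "m < 2^l" for m
    unfolding x_def B_def using mass_pos[OF D _ that] mass_lt1[OF D assms(4) _ that] assms by auto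
  have x'01: "0 < x' y m" "x' y m < 1" if "m < 2^l" for m y
    unfolding x'_def B_def using mass_pos[OF Dpt _ that] mass_lt1[OF Dpt assms(4) _ that] assms by auto
  have x'eq: "x' y m = (al q y * mass \<pi> (B m \<inter> S) + be q y * mass \<pi> (B m - S)) / P y" for y m
    unfolding x'_def pt_def P_def q_def B_def by (rule mass_post) simp
  define dr where "dr m = P True * F (x' True m) + P False * F (x' False m) - F (x m)" for m
  have LHS: "(\<Sum>y\<in>UNIV. prob_obs L p \<pi> S y * Unest L l (post L p \<pi> S y)) - Unest L l \<pi>
      = (\<Sum>m<2^l. dr m)"
    unfolding Unest_eq UNIV_bool dr_def x'_def x_def B_def pt_def P_def
    by (simp add: sum_distrib_left sum.distrib sum_subtractf)
  define cA where "cA y = al q y / P y" for y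
  define cB where "cB y = be q y / P y" for y
  define Ea where "Ea = P True * cA True * ln (cA True) + P False * cA False * ln (cA False)"
  define Eb where "Eb = P True * cB True * ln (cB True) + P False * cB False * ln (cB False)"
  have cApos: "0 < cA y" for y unfolding cA_def al_def using Ppos q0 by auto
  have cBpos: "0 < cB y" for y unfolding cB_def be_def using Ppos q0 by auto
  have cAs: "P True * cA True + P False * cA False = 1"
    unfolding cA_def using Ppos[of True] Ppos[of False] by (simp add: al_def)
  have cBs: "P True * cB True + P False * cB False = 1"
    unfolding cB_def using Ppos[of True] Ppos[of False] by (simp add: be_def)
  have Pnn: "0 \<le> P True" "0 \<le> P False" using Ppos less_imp_le by auto
  have Eb0: "0 \<le> Eb"
  proof -
    have "P True * (cB True - 1) \<le> P True * (cB True * ln (cB True))"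
      using xlnx_ge[OF cBpos] Pnn by (intro mult_left_mono) auto
    moreover have "P False * (cB False - 1) \<le> P False * (cB False * ln (cB False))"
      using xlnx_ge[OF cBpos] Pnn by (intro mult_left_mono) auto
    ultimately show ?thesis using cBs Psum unfolding Eb_def by (simp add: algebra_simps)
  qed
  show ?thesis
  proof (cases "l' \<le> l")
    case True
    have sA: "s \<le> 2/3" using s23 True assms(5) unfolding s_def by simp
    have drA: "dr m \<ge> mass \<pi> (B m \<inter> S) * Ea + mass \<pi> (B m - S) * Eb" if m: "m < 2^l" for m
    proof (cases "m' = m div 2^(l-l')")
      case True
      have "B m \<subseteq> S"
      proof
        fix i assume i: "i \<in> B m"
        show "i \<in> S" unfolding S using Hset_div[OF \<open>l' \<le> l\<close> _ i[unfolded B_def]] assms True by auto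
      qed
      hence e1: "B m \<inter> S = B m" "B m - S = {}" by auto
      have xe: "x' y m = cA y * x m" for y unfolding x'eq e1 cA_def x_def by (simp add: mass_def)
      have "dr m \<ge> x m * Ea"
        unfolding dr_def xe Ea_def
        using bin_in[OF x01[OF m] Pnn Psum cApos cApos cAs] x'01[OF m] xe
        by (simp add: algebra_simps)
      thus ?thesis unfolding e1 by (simp add: x_def mass_def)
    next
      case False
      have "B m \<inter> S = {}"
      proof (rule ccontr)
        assume "B m \<inter> S \<noteq> {}"
        then obtain i where i: "i \<in> B m" "i \<in> S" by auto
        show False using Hset_div[OF \<open>l' \<le> l\<close> _ i(1)[unfolded B_def], of m'] i(2) S assms False by auto
      qed
      hence e1: "B m \<inter> S = {}" "B m - S = B m" by auto
      have xe: "x' y m = cB y * x m" for y unfolding x'eq e1 cB_def x_def by (simp add: mass_def)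
      have "dr m \<ge> x m * Eb"
        unfolding dr_def xe Eb_def
        using bin_in[OF x01[OF m] Pnn Psum cBpos cBpos cBs] x'01[OF m] xe
        by (simp add: algebra_simps)
      thus ?thesis unfolding e1 by (simp add: x_def mass_def)
    qed
    have sumS: "(\<Sum>m<2^l. mass \<pi> (B m \<inter> S)) = s"
    proof -
      have "mass (\<lambda>i. if i \<in> S then \<pi> i else 0) (cells L) = (\<Sum>m<2^l. mass (\<lambda>i. if i \<in> S then \<pi> i else 0) (B m))"
        unfolding B_def using mass_partition assms(5) by simp
      moreover have "mass (\<lambda>i. if i \<in> S then \<pi> i else 0) A = mass \<pi> (A \<inter> S)" if "finite A" for A
        unfolding mass_def using that by (simp add: sum.inter_restrict)
      moreover have "cells L \<inter> S = S" using sub by auto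
      ultimately show ?thesis unfolding s_def B_def by simp
    qed
    have sumN: "(\<Sum>m<2^l. mass \<pi> (B m - S)) = 1 - s"
    proof -
      have "mass (\<lambda>i. if i \<in> -S then \<pi> i else 0) (cells L) = (\<Sum>m<2^l. mass (\<lambda>i. if i \<in> -S then \<pi> i else 0) (B m))"
        unfolding B_def using mass_partition assms(5) by simp
      moreover have "mass (\<lambda>i. if i \<in> -S then \<pi> i else 0) A = mass \<pi> (A - S)" if "finite A" for A
        unfolding mass_def using that by (simp add: sum.inter_restrict Diff_eq)
      moreover have "mass \<pi> (cells L - S) = 1 - s"
        using D sub unfolding mass_def pdist_def s_def by (simp add: sum_diff)
      ultimately show ?thesis unfolding B_def by simp
    qed
    have "(\<Sum>m<2^l. dr m) \<ge> (\<Sum>m<2^l. mass \<pi> (B m \<inter> S) * Ea + mass \<pi> (B m - S) * Eb)"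
      using drA by (intro sum_mono) auto
    also have "(\<Sum>m<2^l. mass \<pi> (B m \<inter> S) * Ea + mass \<pi> (B m - S) * Eb) = s * Ea + (1 - s) * Eb"
      using sumS sumN by (simp add: sum.distrib sum_distrib_right[symmetric])
    also have "s * Ea + (1 - s) * Eb = MI_bsc s q"
    proof -
      have pT: "s * (1 - q) + (1 - s) * q = P True" unfolding Peq al_def be_def by simp
      have pF: "s * q + (1 - s) * (1 - q) = P False" unfolding Peq al_def be_def by simp
      have mi: "MI_bsc s q = s * ((1-q) * ln ((1-q)/P True) + q * ln (q / P False))
          + (1-s) * (q * ln (q/P True) + (1-q) * ln ((1-q)/P False))"
      proof -
        have pT': "q + s - q*(s*2) = P True" unfolding Peq al_def be_def by (simp add: algebra_simps)
        have pF': "1 + q*(s*2) - (q+s) = P False" unfolding Peq al_def be_def by (simp add: algebra_simps)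
        show ?thesis
          unfolding MI_bsc_def Let_def UNIV_bool
          apply (simp add: algebra_simps)
          apply (simp only: pT' pF')
          done
      qed
      have ea: "Ea = (1-q) * ln ((1-q)/P True) + q * ln (q / P False)"
        unfolding Ea_def cA_def al_def using Ppos[of True] Ppos[of False] by simp
      have eb: "Eb = q * ln (q/P True) + (1-q) * ln ((1-q)/P False)"
        unfolding Eb_def cB_def be_def using Ppos[of True] Ppos[of False] by simp
      show ?thesis unfolding mi ea eb ..
    qed
    finally have "MI_bsc s q \<le> (\<Sum>m<2^l. dr m)" .
    moreover have "MI_bsc (1/3) p0 \<le> MI_bsc s q"
      using finalA[of s q p0] s13 sA q0 qp0 p00 unfolding s_def by auto
    moreover have "K_h p \<le> MI_bsc (1/3) p0" unfolding K_h_def p0_def by simp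
    ultimately show ?thesis unfolding LHS by linarith
  next
    case False
    hence ll': "l \<le> l'" by simp
    define Q where "Q = m' div 2^(l'-l)"
    have Q: "Q < 2^l"
    proof -
      have "(2::nat)^l' = 2^l * 2^(l'-l)" using ll' by (simp add: power_add[symmetric])
      thus ?thesis unfolding Q_def using S(4) by (simp add: less_mult_imp_div_less)
    qed
    have SQ: "S \<subseteq> B Q"
    proof
      fix i assume "i \<in> S"
      thus "i \<in> B Q" unfolding B_def Q_def using Hset_div[OF ll' S(3), of i m' "m' div 2^(l'-l)"] S by auto
    qed
    have dis: "B m \<inter> S = {}" if "m \<noteq> Q" for m
    proof (rule ccontr)
      assume "B m \<inter> S \<noteq> {}"
      then obtain i where i: "i \<in> B m" "i \<in> S" by auto
      show False using Hset_div[OF ll' S(3), of i m' m] i S that unfolding B_def Q_def by auto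
    qed
    have drO: "dr m \<ge> x m * Eb" if m: "m < 2^l" "m \<noteq> Q" for m
    proof -
      have e1: "B m \<inter> S = {}" "B m - S = B m" using dis[OF m(2)] by auto
      have xe: "x' y m = cB y * x m" for y unfolding x'eq e1 cB_def x_def by (simp add: mass_def)
      show "dr m \<ge> x m * Eb"
        unfolding dr_def xe Eb_def
        using bin_in[OF x01[OF m(1)] Pnn Psum cBpos cBpos cBs] x'01[OF m(1)] xe
        by (simp add: algebra_simps)
    qed
    define v where "v = 1 - x Q"
    have v01: "0 < v" "v < 1" unfolding v_def using x01[OF Q] by auto
    have xQ: "x Q = 1 - v" unfolding v_def by simp
    have x'Q: "x' y Q = 1 - cB y * v" for y
    proof -
      have e1: "B Q \<inter> S = S" using SQ by auto
      have e2: "mass \<pi> (B Q - S) = x Q - s"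
        unfolding x_def s_def mass_def using SQ by (simp add: sum_diff B_def)
      have "x' y Q = (al q y * s + be q y * (x Q - s)) / P y"
        unfolding x'eq e1 e2 s_def ..
      also have "\<dots> = 1 - cB y * v"
        unfolding cB_def v_def using Ppos[of y] by (simp add: Peq field_simps)
      finally show ?thesis .
    qed
    have drQ: "dr Q \<ge> - (P True * ln (cB True) + P False * ln (cB False)) + v * Eb"
      unfolding dr_def x'Q xQ Eb_def
      using bin_Q[OF v01 Pnn Psum cBpos cBpos cBs] x'01[OF Q] x'Q
      by (simp add: algebra_simps)
    define lb where "lb m = (if m = Q then - (P True * ln (cB True) + P False * ln (cB False)) + v * Eb
        else x m * Eb)" for m
    have "(\<Sum>m<2^l. dr m) \<ge> (\<Sum>m<2^l. lb m)"
      using drQ drO unfolding lb_def by (intro sum_mono) auto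
    also have "(\<Sum>m<2^l. lb m) = lb Q + (\<Sum>m\<in>{..<2^l} - {Q}. lb m)"
      using Q by (simp add: sum.remove)
    also have "(\<Sum>m\<in>{..<2^l} - {Q}. lb m) \<ge> 0"
    proof (intro sum_nonneg)
      fix m assume "m \<in> {..<2^l} - {Q}"
      hence "0 < x m" "m \<noteq> Q" using x01 by auto
      thus "0 \<le> lb m" unfolding lb_def using Eb0 by simp
    qed
    hence "lb Q + (\<Sum>m\<in>{..<2^l} - {Q}. lb m) \<ge> lb Q" by simp
    finally have "(\<Sum>m<2^l. dr m) \<ge> lb Q" .
    moreover have "lb Q \<ge> - (P True * ln (cB True) + P False * ln (cB False))"
      unfolding lb_def using v01 Eb0 by simp
    moreover have "- (P True * ln (cB True) + P False * ln (cB False)) = KL_bern (P True) q"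
    proof -
      have PF: "P False = 1 - P True" using Psum by simp
      show ?thesis unfolding cB_def be_def KL_bern_def PF using Ppos[of True] Ppos[of False] q0 PF
        by (simp add: ln_div algebra_simps)
    qed
    moreover have "2/3 * KL_bern (1/3 * (1 - p0) + 2/3 * p0) p0 \<le> KL_bern (P True) q"
      unfolding PT using finalB[of s q p0] s13 s1 q0 qp0 p00 unfolding s_def by auto
    moreover have "K_h p \<le> 2/3 * KL_bern (1/3 * (1 - p0) + 2/3 * p0) p0" unfolding K_h_def p0_def by simp
    ultimately show ?thesis unfolding LHS by linarith
  qed
qed

end
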